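(* If $(a_0,a_1,\cdots,a_{k-1})\neq0$, then \[{\rm rk}(B_{\vec a})\geq \frac{m}{e}-2(k-1).\]
   Context: Let $m,n,d,e$ be fixed positive integers such that $m=2n$, $e=\gcd(n,d)=\gcd(m,d)$, and $1\leq k\leq \frac{n}{e}$. For $\vec a=(a_0,a_1,\cdots,a_k)\in\mathbb{F}_{2^{n}}\times\mathbb{F}_{2^m}^k$, define the quadratic form on the $\mathbb{F}_{2^e}$-vector space $\mathbb{F}_{2^m}$ \[Q_{\vec a}(x)={\rm Tr}_{\mathbb{F}_{2^{n}}/\mathbb{F}_{2^e}}(a_0x^{2^{\frac{nd}{e}}+1})+\sum_{j=1}^{k-1}{\rm Tr}_{\mathbb{F}_{2^{m}}/\mathbb{F}_{2^e}}(a_jx^{2^{(\frac{n}{e}-j)d}+1})+{\rm Tr}_{\mathbb{F}_{2^{m}}/\mathbb{F}_{2^e}}(a_kx),\] and the associated $\mathbb{F}_{2^e}$-bilinear form $B_{\vec a}(x,y)=Q_{\vec a}(x+y)-Q_{\vec a}(x)-Q_{\vec a}(y)$, i.e. \[B_{\vec a}(x,y)={\rm Tr}_{\mathbb{F}_{2^{n}}/\mathbb{F}_{2^e}}(a_0(xy^{2^{\frac{nd}{e}}}+x^{2^{\frac{nd}{e}}}y))+\sum_{j=1}^{k-1}{\rm Tr}_{\mathbb{F}_{2^{m}}/\mathbb{F}_{2^e}}(a_j(xy^{2^{(\frac{n}{e}-j)d}}+x^{2^{(\frac{n}{e}-j)d}}y)).\] ${\rm rk}(B_{\vec a})$ denotes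 the rank of $B_{\vec a}$ as a bilinear form over $\mathbb{F}_{2^e}$ on $\mathbb{F}_{2^m}$, i.e. $\frac{m}{e}-\dim_{\mathbb{F}_{2^e}}{\rm Rad}(B_{\vec a})$, where ${\rm Rad}(B_{\vec a})=\{x\in\mathbb{F}_{2^m}\mid B_{\vec a}(x,y)=0~\forall y\in\mathbb{F}_{2^m}\}$. *)

theory Defs
  imports Main
begin

text \<open>The field F_{2^m} is modelled as a finite field type 'a of characteristic 2
with 2^m elements; F_{2^t} (t dividing m) is the subfield {x. x^(2^t) = x}.\<close>

definition subfield_elems :: "nat \<Rightarrow> 'a::field set" where
  "subfield_elems t = {x. x ^ (2 ^ t) = x}"

definition rel_trace :: "nat \<Rightarrow> nat \<Rightarrow> 'a::field \<Rightarrow> 'a" where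
  "rel_trace N e y = (\<Sum>i<N div e. y ^ (2 ^ (e * i)))"

definition Bform :: "nat \<Rightarrow> nat \<Rightarrow> nat \<Rightarrow> nat \<Rightarrow> nat \<Rightarrow> (nat \<Rightarrow> 'a::field) \<Rightarrow> 'a \<Rightarrow> 'a \<Rightarrow> 'a" where
  "Bform m n d e k a x y =
     rel_trace n e (a 0 * (x * y ^ (2 ^ (n * d div e)) + x ^ (2 ^ (n * d div e)) * y))
     + (\<Sum>j\<in>{1..<k}. rel_trace m e (a j * (x * y ^ (2 ^ ((n div e - j) * d))
                                              + x ^ (2 ^ ((n div e - j) * d)) * y)))"

definition Rad :: "('a \<Rightarrow> 'a \<Rightarrow> 'a::field) \<Rightarrow> 'a set" where
  "Rad B = {x. \<forall>y. B x y = 0}"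

definition span_over :: "'a::field set \<Rightarrow> 'a set \<Rightarrow> 'a set" where
  "span_over K S = {v. \<exists>c. (\<forall>s\<in>S. c s \<in> K) \<and> v = (\<Sum>s\<in>S. c s * s)}"

definition dim_over :: "'a::field set \<Rightarrow> 'a set \<Rightarrow> nat" where
  "dim_over K V = (LEAST r. \<exists>S. finite S \<and> S \<subseteq> V \<and> card S = r \<and> V \<subseteq> span_over K S)"

definition rk_over :: "nat \<Rightarrow> nat \<Rightarrow> ('a \<Rightarrow> 'a \<Rightarrow> 'a::field) \<Rightarrow> nat" where
  "rk_over m e B = m div e - dim_over (subfield_elems e) (Rad B)"

end

theory Submission
  imports Defs "HOL-Computational_Algebra.Polynomial"
begin


definition fr :: "nat \<Rightarrow> 'a::field \<Rightarrow> 'a" where "fr t x = x ^ (2 ^ t)"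

lemma char2_neg: "(2::'a::field) = 0 \<Longrightarrow> - (x::'a) = x"
  by (metis add_eq_0_iff equation_minus_iff mult_2 mult_zero_left)

lemma char2_minus: "(2::'a::field) = 0 \<Longrightarrow> (x::'a) - y = x + y"
  by (metis char2_neg diff_conv_add_uminus)

lemma fr_add: assumes "(2::'a::field) = 0" shows "fr t (x + y) = fr t x + fr t (y::'a)"
  unfolding fr_def
proof (induction t)
  case 0 then show ?case by simp
next
  case (Suc t)
  have sq: "(u + v)^2 = u^2 + v^2" for u v :: 'a
  proof -
    have "(u+v)^2 = u^2 + v^2 + 2*u*v" by (simp add: power2_eq_square algebra_simps)
    then show ?thesis using assms by simp
  qed
  have "(x + y) ^ 2 ^ Suc t = ((x+y)^2^t)^2" by (simp add: power_mult[symmetric] mult.commute)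
  also have "\<dots> = (x^2^t)^2 + (y^2^t)^2" using Suc sq by simp
  finally show ?case by (simp add: power_mult[symmetric] mult.commute)
qed

lemma fr_diff: assumes "(2::'a::field) = 0" shows "fr t (x - y) = fr t x - fr t (y::'a)"
  using fr_add[OF assms] char2_minus[OF assms] by metis

lemma fr_mult: "fr t (x * y) = fr t x * fr t y"
  by (simp add: fr_def power_mult_distrib)

lemma fr_fr: "fr a (fr b x) = fr (a + b) x"
  by (simp add: fr_def power_mult[symmetric] power_add mult.commute)

lemma fr_0 [simp]: "fr 0 x = x" by (simp add: fr_def)
lemma fr_zero [simp]: "fr t 0 = 0" by (simp add: fr_def)
lemma fr_one [simp]: "fr t 1 = 1" by (simp add: fr_def)
lemma fr_eq0 [simp]: "fr t x = 0 \<longleftrightarrow> x = 0" by (simp add: fr_def)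
lemma fr_inverse: "fr t (inverse x) = inverse (fr t x)" by (simp add: fr_def power_inverse)

lemma fr_inj: assumes "(2::'a::field) = 0" "fr t x = fr t (y::'a)" shows "x = y"
proof -
  have "fr t (x - y) = 0" using assms fr_diff[OF assms(1)] by simp
  then show ?thesis by simp
qed

lemma fr_sum: assumes "(2::'a::field) = 0" shows "fr t (\<Sum>i\<in>I. f i) = (\<Sum>i\<in>I. fr t (f i::'a))"
  by (induction I rule: infinite_finite_induct) (auto simp: fr_add[OF assms])



lemma finite_field_pow: 
  assumes "card (UNIV :: 'a::{field,finite} set) = N"
  shows "(x::'a) ^ N = x"
proof -
  have N1: "N \<ge> 1" using assms by (metis One_nat_def Suc_leI card_gt_0_iff finite_UNIV UNIV_not_empty)
  show ?thesis
  proof (cases "x = 0")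
    case True then show ?thesis using N1 by simp
  next
    case False
    let ?U = "UNIV - {0::'a}"
    have fin: "finite ?U" by simp
    have inj: "inj_on (\<lambda>y. x * y) ?U" using False by (auto simp: inj_on_def)
    have im: "(\<lambda>y. x * y) ` ?U = ?U"
    proof
      show "(\<lambda>y. x * y) ` ?U \<subseteq> ?U" using False by auto
      show "?U \<subseteq> (\<lambda>y. x * y) ` ?U"
      proof
        fix z assume z: "z \<in> ?U"
        have "z = x * (z / x)" using False by simp
        moreover have "z / x \<in> ?U" using z False by simp
        ultimately show "z \<in> (\<lambda>y. x * y) ` ?U" by blast
      qed
    qed
    have "prod (\<lambda>y. x * y) ?U = prod (\<lambda>y. y) ((\<lambda>y. x * y) ` ?U)"
      using prod.reindex[OF inj, of "\<lambda>y. y"] by (simp add: comp_def)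
    then have "prod (\<lambda>y. y) ?U = x ^ card ?U * prod (\<lambda>y. y) ?U"
      using im by (simp add: prod.distrib)
    moreover have "prod (\<lambda>y. y) ?U \<noteq> 0" by simp
    ultimately have "x ^ card ?U = 1" by simp
    moreover have "card ?U = N - 1" using assms by (simp add: card_Diff_singleton)
    ultimately have "x ^ (N - 1) = 1" by simp
    then have "x ^ (N - 1) * x = x" by simp
    then show ?thesis using N1 by (metis Suc_diff_1 less_le_trans power_Suc2 zero_less_one)
  qed
qed



lemma sum_swap_tri: "(\<Sum>i\<le>(R::nat). \<Sum>j<i. f i j) = (\<Sum>j<R. \<Sum>i\<in>{j<..R}. f i j :: 'a::comm_monoid_add)"
proof (induction R)
  case 0 then show ?case by simp
next
  case (Suc R)
  have "(\<Sum>j<Suc R. \<Sum>i\<in>{j<..Suc R}. f i j) = (\<Sum>j<Suc R. (\<Sum>i\<in>{j<..R}. f i j) + f (Suc R) j)"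
  proof (rule sum.cong)
    fix j assume "j \<in> {..<Suc R}"
    then have "{j<..Suc R} = insert (Suc R) {j<..R}" by auto
    then show "(\<Sum>i\<in>{j<..Suc R}. f i j) = (\<Sum>i\<in>{j<..R}. f i j) + f (Suc R) j"
      by (simp add: add.commute)
  qed simp
  also have "\<dots> = (\<Sum>j<R. \<Sum>i\<in>{j<..R}. f i j) + (\<Sum>j<Suc R. f (Suc R) j)"
    by (simp add: sum.distrib)
  finally show ?case using Suc by simp
qed

lemma fiber_card:
  fixes g :: "'a::{field,finite} \<Rightarrow> 'a"
  assumes gadd: "\<And>x y. g (x - y) = g x - g y" and gK: "\<And>y. g y = 0 \<Longrightarrow> y \<in> K"
  shows "card {y. g y \<in> W} \<le> card K * card W"
proof -
  have "{y. g y \<in> W} = (\<Union>w\<in>W. {y. g y = w})" by auto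
  then have "card {y. g y \<in> W} \<le> (\<Sum>w\<in>W. card {y. g y = w})"
    using card_UN_le[of W "\<lambda>w. {y. g y = w}"] by simp
  also have "\<dots> \<le> (\<Sum>w\<in>W. card K)"
  proof (rule sum_mono)
    fix w assume "w \<in> W"
    show "card {y. g y = w} \<le> card K"
    proof (cases "\<exists>y0. g y0 = w")
      case False then show ?thesis by simp
    next
      case True
      then obtain y0 where y0: "g y0 = w" by blast
      have "{y. g y = w} \<subseteq> (\<lambda>k. y0 + k) ` K"
      proof
        fix y assume "y \<in> {y. g y = w}"
        then have "g (y - y0) = 0" using gadd y0 by simp
        then have "y - y0 \<in> K" by (rule gK)
        then show "y \<in> (\<lambda>k. y0 + k) ` K" by (force simp: image_def)
      qed
      then have "card {y. g y = w} \<le> card ((\<lambda>k. y0 + k) ` K)" by (simp add: card_mono)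
      also have "\<dots> \<le> card K" by (rule card_image_le) simp
      finally show ?thesis .
    qed
  qed
  also have "\<dots> = card K * card W" by simp
  finally show ?thesis .
qed




lemma ker_bound:
  fixes c :: "nat \<Rightarrow> 'a::{field,finite}"
  assumes char2: "(2::'a) = 0" and fixK: "\<And>y::'a. fr d y = y \<Longrightarrow> y \<in> K"
    and nz: "\<exists>i\<le>r. c i \<noteq> 0"
  shows "card {x. (\<Sum>i\<le>r. c i * fr (d*i) x) = 0} \<le> card K ^ r"
  using nz
proof (induction r arbitrary: c)
  case 0
  then have "{x. (\<Sum>i\<le>0. c i * fr (d*i) x) = 0} = {0}" by auto
  then show ?case by simp
next
  case (Suc r)
  let ?L = "\<lambda>x. (\<Sum>i\<le>Suc r. c i * fr (d*i) x)"
  show ?case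
  proof (cases "\<exists>v. v \<noteq> 0 \<and> ?L v = 0")
    case False
    then have "{x. ?L x = 0} \<subseteq> {0}" by auto
    then have "card {x. ?L x = 0} \<le> card {0::'a}" by (intro card_mono) auto
    then have "card {x. ?L x = 0} \<le> 1" by simp
    also have "1 \<le> card K ^ Suc r"
    proof -
      have "0 \<in> K" using fixK[of 0] by simp
      then have "card K \<ge> 1" by (auto simp: Suc_le_eq card_gt_0_iff)
      then show ?thesis by simp
    qed
    finally show ?thesis .
  next
    case True
    then obtain v where v: "v \<noteq> 0" "?L v = 0" by blast
    define dd where "dd i = c i * fr (d*i) v" for i
    define ee where "ee j = (\<Sum>i\<in>{j<..Suc r}. dd i)" for j
    let ?M = "\<lambda>z. (\<Sum>j\<le>r. ee j * fr (d*j) z)"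
    have sumdd: "(\<Sum>i\<le>Suc r. dd i) = 0" using v by (simp add: dd_def)
    have key: "?L (v * y) = ?M (fr d y - y)" for y
    proof -
      have "?L (v*y) = (\<Sum>i\<le>Suc r. dd i * fr (d*i) y)"
        by (simp add: dd_def fr_mult mult.assoc)
      also have "\<dots> = (\<Sum>i\<le>Suc r. dd i * fr (d*i) y) - (\<Sum>i\<le>Suc r. dd i) * y"
        using sumdd by simp
      also have "\<dots> = (\<Sum>i\<le>Suc r. dd i * (fr (d*i) y - y))"
        by (simp only: right_diff_distrib sum_subtractf sum_distrib_right)
      also have "\<dots> = (\<Sum>i\<le>Suc r. \<Sum>j<i. dd i * fr (d*j) (fr d y - y))"
      proof (rule sum.cong[OF refl])
        fix i
        have "fr (d*i) y - y = (\<Sum>j<i. fr (d * Suc j) y - fr (d*j) y)"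
          by (subst sum_lessThan_telescope[of "\<lambda>j. fr (d*j) y"]) simp
        also have "\<dots> = (\<Sum>j<i. fr (d*j) (fr d y - y))"
          by (simp add: fr_diff[OF char2] fr_fr add.commute)
        finally show "dd i * (fr (d*i) y - y) = (\<Sum>j<i. dd i * fr (d*j) (fr d y - y))"
          by (simp add: sum_distrib_left)
      qed
      also have "\<dots> = (\<Sum>j<Suc r. \<Sum>i\<in>{j<..Suc r}. dd i * fr (d*j) (fr d y - y))"
        by (rule sum_swap_tri)
      also have "\<dots> = ?M (fr d y - y)"
        by (simp add: ee_def sum_distrib_right lessThan_Suc_atMost)
      finally show ?thesis .
    qed
    have nzM: "\<exists>j\<le>r. ee j \<noteq> 0"
    proof (rule ccontr)
      assume "\<not> ?thesis"
      then have e0: "\<And>j. j \<le> r \<Longrightarrow> ee j = 0" by auto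
      have eS: "ee j = dd (Suc j) + ee (Suc j)" if "j \<le> r" for j
      proof -
        have "{j<..Suc r} = insert (Suc j) {Suc j<..Suc r}" using that by auto
        then show ?thesis by (simp add: ee_def)
      qed
      have eR: "ee (Suc r) = 0" by (simp add: ee_def)
      have ds: "dd i = 0" if "1 \<le> i" "i \<le> Suc r" for i
      proof -
        define j where "j = i - 1"
        have j: "i = Suc j" "j \<le> r" using that by (simp_all add: j_def)
        show ?thesis
        proof (cases "j = r")
          case True then show ?thesis using eS[of r] e0[of r] eR j by simp
        next
          case False then show ?thesis using eS[of j] e0[of j] e0[of "Suc j"] j by simp
        qed
      qed
      have "(\<Sum>i\<le>Suc r. dd i) = dd 0 + (\<Sum>i\<in>{1..Suc r}. dd i)"
        by (simp add: atMost_atLeast0 sum.atLeast_Suc_atMost)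
      then have "dd 0 = 0" using sumdd ds by simp
      then have "\<And>i. i \<le> Suc r \<Longrightarrow> dd i = 0" using ds by (case_tac "i = 0") auto
      then have "\<And>i. i \<le> Suc r \<Longrightarrow> c i = 0" using v(1) by (simp add: dd_def)
      then show False using Suc.prems by auto
    qed
    have IH: "card {z. ?M z = 0} \<le> card K ^ r" using Suc.IH[OF nzM] .
    have "{x. ?L x = 0} \<subseteq> (\<lambda>y. v * y) ` {y. (fr d y - y) \<in> {z. ?M z = 0}}"
    proof
      fix x assume "x \<in> {x. ?L x = 0}"
      then have L0: "?L x = 0" by simp
      have eq: "v * (x / v) = x" using v(1) by simp
      have "?M (fr d (x/v) - x/v) = ?L (v * (x / v))" by (rule key[symmetric])
      also have "\<dots> = ?L x" by (simp only: eq)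
      finally have "?M (fr d (x/v) - x/v) = 0" using L0 by simp
      then have "x/v \<in> {y. (fr d y - y) \<in> {z. ?M z = 0}}" by simp
      then show "x \<in> (\<lambda>y. v * y) ` {y. (fr d y - y) \<in> {z. ?M z = 0}}"
        by (rule image_eqI[where x="x/v", rotated]) (simp add: eq v(1))
    qed
    then have "card {x. ?L x = 0} \<le> card ((\<lambda>y. v * y) ` {y. (fr d y - y) \<in> {z. ?M z = 0}})"
      by (intro card_mono) simp_all
    also have "\<dots> \<le> card {y. (fr d y - y) \<in> {z. ?M z = 0}}" by (rule card_image_le) simp
    also have "\<dots> \<le> card K * card {z. ?M z = 0}"
    proof (rule fiber_card[where g = "\<lambda>y. fr d y - y"])
      show "fr d (x - y) - (x - y) = fr d x - x - (fr d y - y)" for x y :: 'a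
        using fr_diff[OF char2, of d x y] by simp
      show "fr d y - y = 0 \<Longrightarrow> y \<in> K" for y using fixK by simp
    qed
    also have "\<dots> \<le> card K * card K ^ r" using IH by simp
    finally show ?thesis by simp
  qed
qed




locale sf =
  fixes K :: "'a::{field,finite} set"
  assumes K0: "0 \<in> K" and K1: "1 \<in> K"
    and Kdiff: "\<And>a b. a \<in> K \<Longrightarrow> b \<in> K \<Longrightarrow> a - b \<in> K"
    and Kmult: "\<And>a b. a \<in> K \<Longrightarrow> b \<in> K \<Longrightarrow> a * b \<in> K"
    and Kinv: "\<And>a. a \<in> K \<Longrightarrow> inverse a \<in> K"
begin

lemma span_diff: assumes "u \<in> span_over K S" "w \<in> span_over K S" shows "u - w \<in> span_over K S"
proof -
  obtain c where c: "\<forall>s\<in>S. c s \<in> K" "u = (\<Sum>s\<in>S. c s * s)" using assms(1) unfolding span_over_def by blast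
  obtain c' where c': "\<forall>s\<in>S. c' s \<in> K" "w = (\<Sum>s\<in>S. c' s * s)" using assms(2) unfolding span_over_def by blast
  have "u - w = (\<Sum>s\<in>S. (c s - c' s) * s)" using c c' by (simp add: sum_subtractf left_diff_distrib)
  then show ?thesis unfolding span_over_def using c c' Kdiff by (intro CollectI exI[of _ "\<lambda>s. c s - c' s"]) auto
qed

lemma span_scale: assumes "u \<in> span_over K S" "k \<in> K" shows "k * u \<in> span_over K S"
proof -
  obtain c where c: "\<forall>s\<in>S. c s \<in> K" "u = (\<Sum>s\<in>S. c s * s)" using assms(1) unfolding span_over_def by blast
  have "k * u = (\<Sum>s\<in>S. (k * c s) * s)" using c by (simp add: sum_distrib_left mult.assoc)
  then show ?thesis unfolding span_over_def using c assms(2) Kmult by (intro CollectI exI[of _ "\<lambda>s. k * c s"]) auto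
qed

lemma span_base: assumes "finite S" "s \<in> S" shows "s \<in> span_over K S"
proof -
  have "(\<Sum>s'\<in>S. (if s' = s then 1 else 0) * s') = (\<Sum>s'\<in>S. if s' = s then s' else 0)"
    by (rule sum.cong) auto
  also have "\<dots> = s" using assms by (simp add: sum.delta')
  finally have "(\<Sum>s'\<in>S. (if s' = s then 1 else 0) * s') = s" .
  then show ?thesis unfolding span_over_def using K0 K1 by (intro CollectI exI[of _ "\<lambda>s'. if s' = s then 1 else 0"]) auto
qed

lemma span_insert: assumes "finite S" "v \<notin> S" "u \<in> span_over K S" "k \<in> K"
  shows "u + k * v \<in> span_over K (insert v S)"
proof -
  obtain c where c: "\<forall>s\<in>S. c s \<in> K" "u = (\<Sum>s\<in>S. c s * s)" using assms(3) unfolding span_over_def by blast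
  have "(\<Sum>s\<in>insert v S. (c(v := k)) s * s) = k * v + (\<Sum>s\<in>S. (c(v:=k)) s * s)"
    using assms by simp
  also have "(\<Sum>s\<in>S. (c(v:=k)) s * s) = (\<Sum>s\<in>S. c s * s)"
    using assms(2) by (intro sum.cong) auto
  finally have "u + k * v = (\<Sum>s\<in>insert v S. (c(v := k)) s * s)" using c by (simp add: add.commute)
  then show ?thesis unfolding span_over_def using c assms(4) by (intro CollectI exI[of _ "c(v:=k)"]) auto
qed

lemma span_card: assumes "finite S" "v \<notin> span_over K S"
  shows "card K * card (span_over K S) \<le> card (span_over K (insert v S))"
proof -
  have vS: "v \<notin> S" using assms span_base by blast
  let ?f = "\<lambda>(u, k). u + k * v"
  have inj: "inj_on ?f (span_over K S \<times> K)"
  proof (rule inj_onI, clarify)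
    fix u k u' k' assume h: "u \<in> span_over K S" "k \<in> K" "u' \<in> span_over K S" "k' \<in> K"
      "u + k * v = u' + k' * v"
    show "u = u' \<and> k = k'"
    proof (cases "k = k'")
      case True then show ?thesis using h by simp
    next
      case False
      have "(k' - k) * v = u - u'" using h(5) by (simp add: algebra_simps)
      then have "v = inverse (k' - k) * (u - u')" using False by (simp add: field_simps)
      moreover have "inverse (k' - k) \<in> K" using Kinv Kdiff h by blast
      ultimately have "v \<in> span_over K S" using span_scale span_diff h by metis
      then show ?thesis using assms(2) by blast
    qed
  qed
  have "?f ` (span_over K S \<times> K) \<subseteq> span_over K (insert v S)"
    using span_insert[OF assms(1) vS] by auto
  then have "card (?f ` (span_over K S \<times> K)) \<le> card (span_over K (insert v S))"
    by (intro card_mono) simp_all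
  moreover have "card (?f ` (span_over K S \<times> K)) = card (span_over K S) * card K"
    using card_image[OF inj] by (simp add: card_cartesian_product)
  ultimately show ?thesis by (simp add: mult.commute)
qed

lemma span_sub: assumes "finite S" "S \<subseteq> V" "0 \<in> V" "\<And>x y. x \<in> V \<Longrightarrow> y \<in> V \<Longrightarrow> x + y \<in> V"
   "\<And>k x. k \<in> K \<Longrightarrow> x \<in> V \<Longrightarrow> k * x \<in> V"
  shows "span_over K S \<subseteq> V"
proof
  fix u assume "u \<in> span_over K S"
  then obtain c where c: "\<forall>s\<in>S. c s \<in> K" "u = (\<Sum>s\<in>S. c s * s)" unfolding span_over_def by blast
  have "(\<Sum>s\<in>S. c s * s) \<in> V" using assms(1,2) c(1)
  proof (induction S rule: finite_induct)
    case empty then show ?case using assms(3) by simp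
  next
    case (insert x F) then show ?case using assms(4,5) by simp
  qed
  then show "u \<in> V" using c by simp
qed

lemma card_ge2: "card K \<ge> 2"
proof -
  have "{0,1} \<subseteq> K" using K0 K1 by simp
  then have "card {0::'a,1} \<le> card K" by (intro card_mono) simp_all
  then show ?thesis by simp
qed

lemma dim_bound:
  assumes V0: "0 \<in> V" and Vadd: "\<And>x y. x \<in> V \<Longrightarrow> y \<in> V \<Longrightarrow> x + y \<in> V"
   and Vsc: "\<And>k x. k \<in> K \<Longrightarrow> x \<in> V \<Longrightarrow> k * x \<in> V"
   and cardV: "card V \<le> card K ^ r"
  shows "dim_over K V \<le> r"
proof -
  have claim: "\<exists>S. finite S \<and> S \<subseteq> V \<and> ((V \<subseteq> span_over K S \<and> card S \<le> t) \<or>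
        (card S = t \<and> card K ^ t \<le> card (span_over K S)))" for t
  proof (induction t)
    case 0
    have "card (span_over K {}) = 1" by (simp add: span_over_def)
    then show ?case by (intro exI[of _ "{}"]) simp
  next
    case (Suc t)
    then obtain S where S: "finite S" "S \<subseteq> V" "(V \<subseteq> span_over K S \<and> card S \<le> t) \<or>
        (card S = t \<and> card K ^ t \<le> card (span_over K S))" by blast
    show ?case
    proof (cases "V \<subseteq> span_over K S")
      case True
      moreover have "card S \<le> t"
      proof (cases "card S \<le> t")
        case False then show ?thesis using S(3) by simp
      qed simp
      ultimately show ?thesis using S by (intro exI[of _ S]) simp
    next
      case False
      then obtain v where v: "v \<in> V" "v \<notin> span_over K S" by blast
      have vS: "v \<notin> S" using v S span_base by blast
      have ct: "card S \<le> t" using S(3) False by auto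
      have "card K ^ t \<le> card (span_over K S)" using S(3) False by auto
      then have "card K * card K ^ t \<le> card K * card (span_over K S)" by simp
      also have "\<dots> \<le> card (span_over K (insert v S))" by (rule span_card[OF S(1) v(2)])
      finally have c2: "card K ^ Suc t \<le> card (span_over K (insert v S))" by simp
      have c1: "card (insert v S) = Suc (card S)" using S(1) vS by simp
      show ?thesis
      proof (cases "V \<subseteq> span_over K (insert v S)")
        case True
        then show ?thesis using S v c1 ct by (intro exI[of _ "insert v S"]) simp
      next
        case False2: False
        have "card (insert v S) = Suc t" using c1 ct S(3) False by auto
        then show ?thesis using S v c2 by (intro exI[of _ "insert v S"]) simp
      qed
    qed
  qed
  obtain S where S: "finite S" "S \<subseteq> V" "(V \<subseteq> span_over K S \<and> card S \<le> r) \<or>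
        (card S = r \<and> card K ^ r \<le> card (span_over K S))" using claim by blast
  have sub: "span_over K S \<subseteq> V" by (rule span_sub[OF S(1,2) V0 Vadd Vsc])
  have spans: "V \<subseteq> span_over K S" and cS: "card S \<le> r"
  proof -
    show "V \<subseteq> span_over K S"
    proof (cases "V \<subseteq> span_over K S")
      case False
      then have h: "card S = r" "card K ^ r \<le> card (span_over K S)" using S(3) by auto
      then have "card V \<le> card (span_over K S)" using cardV by simp
      moreover have "card (span_over K S) \<le> card V" using sub by (intro card_mono) simp_all
      ultimately have "card (span_over K S) = card V" by simp
      then have "span_over K S = V" using sub by (intro card_subset_eq) simp_all
      then show ?thesis by simp
    qed simp
    show "card S \<le> r" using S(3) by auto
  qed
  have "dim_over K V \<le> card S"
    unfolding dim_over_def using S(1,2) spans by (intro Least_le) blast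
  then show ?thesis using cS by simp
qed

end




lemma trace_nondeg_gen:
  fixes z :: "'a::{field,finite}"
  assumes card: "card (UNIV :: 'a set) = 2 ^ m" and e_pos: "e > 0" and M1: "M \<ge> 1" and eM: "e * M = m"
    and tr: "\<And>y. (\<Sum>i<M. fr (e*i) (z*y)) = 0"
  shows "z = 0"
proof (rule ccontr)
  assume z: "z \<noteq> 0"
  define p :: "'a poly" where "p = (\<Sum>i<M. monom 1 (2^(e*i)))"
  have pe: "poly p w = (\<Sum>i<M. fr (e*i) w)" for w
    unfolding p_def by (simp only: poly_sum poly_monom fr_def mult_1)
  have allroot: "poly p w = 0" for w
  proof -
    have "w = z * (w / z)" using z by simp
    then have "(\<Sum>i<M. fr (e*i) w) = 0" using tr[of "w/z"] by simp
    then show ?thesis using pe by simp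
  qed
  have cf: "coeff p (2^(e*(M-1))) = 1"
  proof -
    have "coeff p (2^(e*(M-1))) = (\<Sum>i<M. if 2^(e*i) = (2::nat)^(e*(M-1)) then 1 else 0)"
      unfolding p_def coeff_sum by simp
    also have "\<dots> = (\<Sum>i<M. if i = M - 1 then 1 else 0)"
      using e_pos by (intro sum.cong) (auto simp: power_inject_exp)
    also have "\<dots> = 1" using M1 by simp
    finally show ?thesis .
  qed
  then have p0: "p \<noteq> 0" by auto
  have "degree p \<le> 2^(e*(M-1))"
    unfolding p_def
  proof (rule degree_sum_le)
    fix i assume "i \<in> {..<M}"
    then have "2^(e*i) \<le> (2::nat)^(e*(M-1))" by (intro power_increasing) auto
    then show "degree (monom (1::'a) (2^(e*i))) \<le> 2^(e*(M-1))" by (rule order_trans[OF degree_monom_le])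
  qed simp
  also have "\<dots> < 2^m"
  proof -
    have "e*(M-1) < e * M" using e_pos M1 by simp
    then show ?thesis using eM by simp
  qed
  finally have dg: "degree p < 2^m" .
  have "card {w. poly p w = 0} \<le> degree p" by (rule card_poly_roots_bound[OF p0])
  moreover have "{w. poly p w = 0} = UNIV" using allroot by auto
  ultimately have "card (UNIV::'a set) \<le> degree p" by simp
  then show False using card dg by simp
qed




lemma sum_lessThan_add_split: "(\<Sum>i<(a::nat)+b. f i) = (\<Sum>i<a. f i) + (\<Sum>i<b. f (a+i) :: 'b::comm_monoid_add)"
  by (induction b) (simp_all add: add.assoc)

lemma odd_quot:
  fixes n d e :: nat
  assumes "n > 0" "d > 0" "e = gcd n d" "e = gcd (2*n) d"
  shows "odd (d div e)"
proof
  assume ev: "even (d div e)"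
  have e0: "e > 0" using assms by simp
  have ed: "e dvd d" "e dvd n" using assms by simp_all
  obtain d' n' where dn: "d = e * d'" "n = e * n'" using ed by (auto elim!: dvdE)
  have "d div e = d'" using dn e0 by simp
  then have "2 dvd d'" using ev by simp
  have "gcd (2*n) d = e * gcd (2*n') d'" using dn by (simp add: gcd_mult_distrib_nat mult.left_commute)
  then have "e * gcd (2*n') d' = e * 1" using assms(4) by (metis mult_1_right)
  then have "gcd (2*n') d' = 1" using e0 mult_left_cancel[of e "gcd (2*n') d'" 1] by linarith
  moreover have "2 dvd gcd (2*n') d'" using \<open>2 dvd d'\<close> by simp
  ultimately show False by simp
qed

context
  fixes m n d e :: nat and TY :: "'a::{field,finite} itself"
  assumes card: "card (UNIV :: 'a set) = 2 ^ m" and char2: "(2::'a) = 0"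
    and npos: "n > 0" and dpos: "d > 0" and mn: "m = 2 * n"
    and en: "e = gcd n d" and em: "e = gcd m d"
begin

lemma e_pos: "e > 0" using en dpos by simp
lemma e_dvd: "e dvd n" "e dvd d" "e dvd m"
  using en apply simp
  using en apply simp
  using em by (metis gcd_dvd1)

definition NN where "NN = n div e"
definition dd' where "dd' = d div e"

lemma n_eq: "n = e * NN" using e_dvd by (simp add: NN_def)
lemma d_eq: "d = e * dd'" using e_dvd by (simp add: dd'_def)
lemma n_eq2: "e * NN = n" using n_eq by simp
lemma m_eq2: "e * (2 * NN) = m" using n_eq2 mn by (simp add: mult.left_commute)
lemma m_div: "m div e = 2 * NN"
proof -
  have "m = e * (2*NN)" using n_eq mn by simp
  then show ?thesis using e_pos by simp
qed
lemma NN_pos: "NN > 0" using n_eq npos by (metis mult_0_right neq0_conv)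
lemma dd'_odd: "odd dd'" unfolding dd'_def using odd_quot[OF npos dpos en] em mn by simp

lemma frm: "fr m (x::'a) = x" unfolding fr_def using finite_field_pow[OF card] .

lemma frms: "fr (m * s) (x::'a) = x"
proof (induction s)
  case 0 then show ?case by simp
next
  case (Suc s)
  have "fr (m * Suc s) x = fr m (fr (m * s) x)" by (simp add: fr_fr)
  then show ?case using Suc frm by simp
qed

lemma fr_mod: "fr (t + m * s) (x::'a) = fr t x"
  by (metis frms fr_fr)

lemma fr_conj: "fr (n * dd') (x::'a) = fr n x"
proof -
  obtain s where s: "dd' = 2 * s + 1" using dd'_odd oddE by blast
  have "n * dd' = n + m * s" using s mn by simp
  then show ?thesis using fr_mod by simp
qed

lemma fr_K: assumes "fr e (c::'a) = c" shows "fr (e * t) c = c"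
proof (induction t)
  case 0 then show ?case by simp
next
  case (Suc t)
  have "fr (e * Suc t) c = fr e (fr (e * t) c)" by (simp add: fr_fr)
  then show ?case using Suc assms by simp
qed

lemma fixK: assumes "fr d (y::'a) = y" shows "fr e y = y"
proof -
  obtain u v where uv: "d * u = m * v + gcd d m" using bezout_nat[of d m] dpos by auto
  have g: "gcd d m = e" using em by (simp add: gcd.commute)
  have "fr (d * u) y = y"
  proof (induction u)
    case 0 then show ?case by simp
  next
    case (Suc u)
    have "fr (d * Suc u) y = fr d (fr (d * u) y)" by (simp add: fr_fr)
    then show ?case using Suc assms by simp
  qed
  then have "fr (e + m * v) y = y" using uv g by (simp add: add.commute)
  then show ?thesis using fr_mod by simp
qed

definition trm :: "'a \<Rightarrow> 'a" where "trm z = rel_trace m e z"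

lemma trm_fr: "trm z = (\<Sum>i<2*NN. fr (e*i) z)"
  unfolding trm_def rel_trace_def fr_def m_div ..

lemma trm_add: "trm (z + w) = trm z + trm w"
  unfolding trm_fr by (simp add: fr_add[OF char2] sum.distrib)

lemma trm_zero: "trm 0 = 0" unfolding trm_fr by simp

lemma trm_sum: "trm (\<Sum>j\<in>J. f j) = (\<Sum>j\<in>J. trm (f j))"
  by (induction J rule: infinite_finite_induct) (simp_all add: trm_add trm_zero)

lemma trm_inv1: "trm (fr e z) = trm z"
proof -
  have "trm (fr e z) = (\<Sum>i<2*NN. fr (e * Suc i) z)"
    unfolding trm_fr by (simp add: fr_fr add.commute)
  also have "\<dots> = (\<Sum>i<Suc (2*NN). fr (e*i) z) - fr (e*0) z"
    by (simp add: sum.lessThan_Suc_shift del: sum.lessThan_Suc)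
  also have "\<dots> = (\<Sum>i<2*NN. fr (e*i) z) + fr (e*(2*NN)) z - z" by simp
  also have "fr (e*(2*NN)) z = z" using frm by (simp only: m_eq2)
  finally show ?thesis unfolding trm_fr by simp
qed

lemma trm_inv: "trm (fr (e * t) z) = trm z"
proof (induction t)
  case 0 then show ?case by simp
next
  case (Suc t)
  have "fr (e * Suc t) z = fr e (fr (e*t) z)" by (simp add: fr_fr)
  then show ?case using Suc trm_inv1 by simp
qed

lemma trm_split: "trm w = rel_trace n e (w + fr n w)"
proof -
  have "trm w = (\<Sum>i<NN + NN. fr (e*i) w)" unfolding trm_fr by (simp add: mult_2)
  also have "\<dots> = (\<Sum>i<NN. fr (e*i) w) + (\<Sum>i<NN. fr (e*(NN+i)) w)" by (rule sum_lessThan_add_split)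
  also have "(\<Sum>i<NN. fr (e*(NN+i)) w) = (\<Sum>i<NN. fr (e*i) (fr n w))"
    by (rule sum.cong) (simp_all add: fr_fr distrib_left n_eq2 add.commute)
  also have "(\<Sum>i<NN. fr (e*i) w) + (\<Sum>i<NN. fr (e*i) (fr n w)) = (\<Sum>i<NN. fr (e*i) (w + fr n w))"
    by (simp add: fr_add[OF char2] sum.distrib)
  also have "\<dots> = rel_trace n e (w + fr n w)"
    unfolding rel_trace_def fr_def NN_def ..
  finally show ?thesis .
qed

lemma trm_nondeg: assumes "\<And>y. trm (z * y) = 0" shows "z = 0"
proof (rule trace_nondeg_gen[OF card e_pos])
  show "1 \<le> 2*NN" using NN_pos by simp
  show "e * (2*NN) = m" using n_eq mn by simp
  show "\<And>y. (\<Sum>i<2*NN. fr (e*i) (z*y)) = 0" using assms unfolding trm_fr .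
qed


lemma fr_Kdvd: assumes "fr e (c::'a) = c" "e dvd t" shows "fr t c = c"
  using assms(2) fr_K[OF assms(1)] by (auto elim!: dvdE)

lemma delta_sum: assumes "(t::nat) \<le> r" shows "(\<Sum>i\<le>r. (if i = t then b else 0) * F i) = b * (F t :: 'a)"
proof -
  have "(\<Sum>i\<le>r. (if i = t then b else 0) * F i) = (\<Sum>i\<le>r. if i = t then b * F t else 0)"
    by (rule sum.cong) auto
  also have "\<dots> = b * F t" using assms by (simp add: sum.delta)
  finally show ?thesis .
qed

context
  fixes k :: nat and a :: "nat \<Rightarrow> 'a"
  assumes k1: "1 \<le> k" and kN: "k \<le> NN" and a0n: "fr n (a 0) = a 0"
begin

definition LL :: "'a \<Rightarrow> 'a" where
  "LL x = a 0 * fr n x + (\<Sum>j\<in>{1..<k}. fr (d*(NN+j)) (a j * x) + a j * fr (d*(NN-j)) x)"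

lemma Bform_eq: "Bform m n d e k a x y = trm (LL x * y)"
proof -
  have ex1: "n * d div e = n * dd'" unfolding dd'_def using e_dvd by (simp add: div_mult_swap)
  have p1: "u ^ (2 ^ (n * d div e)) = fr n u" for u :: 'a
    using fr_conj unfolding ex1 fr_def by simp
  have p2: "u ^ (2 ^ ((n div e - j) * d)) = fr (d*(NN-j)) u" for u :: 'a and j
    unfolding fr_def NN_def by (simp add: mult.commute)
  have t0: "rel_trace n e (a 0 * (x * fr n y + fr n x * y)) = trm (a 0 * fr n x * y)"
  proof -
    have ffn: "fr n (fr n x) = x" using frm mn by (simp add: fr_fr mult_2)
    have "fr n (a 0 * fr n x * y) = a 0 * x * fr n y" by (simp add: fr_mult a0n ffn)
    then have "a 0 * (x * fr n y + fr n x * y) = a 0 * fr n x * y + fr n (a 0 * fr n x * y)"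
      by (simp add: algebra_simps)
    then show ?thesis using trm_split by simp
  qed
  have tj: "rel_trace m e (a j * (x * fr (d*(NN-j)) y + fr (d*(NN-j)) x * y))
      = trm (fr (d*(NN+j)) (a j * x) * y) + trm (a j * fr (d*(NN-j)) x * y)" if j: "j \<in> {1..<k}" for j
  proof -
    have jN: "j \<le> NN" using j kN by simp
    have "rel_trace m e (a j * (x * fr (d*(NN-j)) y + fr (d*(NN-j)) x * y))
        = trm (a j * x * fr (d*(NN-j)) y) + trm (a j * fr (d*(NN-j)) x * y)"
      unfolding trm_def[symmetric] by (simp add: distrib_left trm_add mult.assoc)
    also have "trm (a j * x * fr (d*(NN-j)) y) = trm (fr (e * (dd' * (NN+j))) (a j * x * fr (d*(NN-j)) y))"
      by (rule trm_inv[symmetric])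
    also have "e * (dd' * (NN+j)) = d * (NN+j)" using d_eq by simp
    also have "fr (d * (NN+j)) (a j * x * fr (d*(NN-j)) y) = fr (d*(NN+j)) (a j * x) * y"
    proof -
      have s2: "(NN+j) + (NN-j) = 2*NN" using jN by simp
      have de: "e * dd' = d" using d_eq by simp
      have "d * (NN+j) + d * (NN-j) = d * (2*NN)" using s2 by (metis distrib_left)
      also have "\<dots> = (e*dd') * (2*NN)" using de by simp
      also have "\<dots> = dd' * (e*(2*NN))" by (simp only: mult_ac)
      also have "\<dots> = m * dd'" using m_eq2 by simp
      finally have "d * (NN+j) + d * (NN-j) = m * dd'" .
      then have "fr (d * (NN+j)) (fr (d*(NN-j)) y) = y" using frms by (simp add: fr_fr)
      then show ?thesis by (simp add: fr_mult)
    qed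
    finally show ?thesis .
  qed
  have "Bform m n d e k a x y = trm (a 0 * fr n x * y)
     + (\<Sum>j\<in>{1..<k}. trm (fr (d*(NN+j)) (a j * x) * y) + trm (a j * fr (d*(NN-j)) x * y))"
    unfolding Bform_def p1 p2 t0 trm_def[symmetric]
    using tj unfolding trm_def by (intro arg_cong2[where f="(+)"] refl sum.cong) simp_all
  also have "\<dots> = trm (LL x * y)"
    unfolding LL_def distrib_right sum_distrib_right trm_add trm_sum by (simp only: mult.assoc)
  finally show ?thesis .
qed


lemma Rad_eq: "Rad (Bform m n d e k a) = {x. LL x = 0}"
proof -
  have "(\<forall>y. Bform m n d e k a x y = 0) \<longleftrightarrow> LL x = 0" for x
  proof
    assume "\<forall>y. Bform m n d e k a x y = 0"
    then have "\<And>y. trm (LL x * y) = 0" using Bform_eq by simp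
    then show "LL x = 0" by (rule trm_nondeg)
  next
    assume "LL x = 0"
    then show "\<forall>y. Bform m n d e k a x y = 0" using Bform_eq trm_zero by simp
  qed
  then show ?thesis unfolding Rad_def by blast
qed

lemma LL_add: "LL (x + x') = LL x + LL x'"
  unfolding LL_def by (simp add: fr_add[OF char2] distrib_left sum.distrib algebra_simps)

lemma LL_zero: "LL 0 = 0"
  unfolding LL_def by simp

lemma LL_scale: assumes c: "fr e c = c" shows "LL (c * x) = c * LL x"
proof -
  have fc: "fr t c = c" if "e dvd t" for t using fr_Kdvd[OF c that] .
  have fcn: "fr n c = c" using fc e_dvd by simp
  have fcd: "fr (d * u) c = c" for u using fc e_dvd by simp
  show ?thesis
    unfolding LL_def fr_mult fcn fcd by (simp add: distrib_left sum_distrib_left mult_ac)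
qed

definition cc :: "nat \<Rightarrow> 'a" where
  "cc i = (if i = k-1 then a 0 else 0) + (\<Sum>j\<in>{1..<k}. (if i = k-1-j then a j else 0)
          + (if i = k-1+j then fr (d*(NN+j)) (a j) else 0))"

lemma LL_P: "LL x = (\<Sum>i\<le>2*(k-1). cc i * fr (d*i) (fr (d*(NN-(k-1))) x))"
proof -
  define G where "G i = fr (d*i) (fr (d*(NN-(k-1))) x)" for i
  define b where "b j = fr (d*(NN+j)) (a j)" for j
  let ?r = "2*(k-1)"
  have "(\<Sum>i\<le>?r. cc i * G i) = (\<Sum>i\<le>?r. (if i = k-1 then a 0 else 0) * G i)
      + (\<Sum>i\<le>?r. \<Sum>j\<in>{1..<k}. (if i = k-1-j then a j else 0) * G i + (if i = k-1+j then b j else 0) * G i)"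
    unfolding cc_def b_def by (simp only: distrib_right sum_distrib_right sum.distrib)
  also have "(\<Sum>i\<le>?r. (if i = k-1 then a 0 else 0) * G i) = a 0 * G (k-1)"
    by (rule delta_sum) simp
  also have "(\<Sum>i\<le>?r. \<Sum>j\<in>{1..<k}. (if i = k-1-j then a j else 0) * G i + (if i = k-1+j then b j else 0) * G i)
      = (\<Sum>j\<in>{1..<k}. \<Sum>i\<le>?r. (if i = k-1-j then a j else 0) * G i + (if i = k-1+j then b j else 0) * G i)"
    by (rule sum.swap)
  also have "\<dots> = (\<Sum>j\<in>{1..<k}. a j * G (k-1-j) + b j * G (k-1+j))"
  proof (rule sum.cong[OF refl])
    fix j assume j: "j \<in> {1..<k}"
    have "(\<Sum>i\<le>?r. (if i = k-1-j then a j else 0) * G i + (if i = k-1+j then b j else 0) * G i)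
       = (\<Sum>i\<le>?r. (if i = k-1-j then a j else 0) * G i) + (\<Sum>i\<le>?r. (if i = k-1+j then b j else 0) * G i)"
      by (rule sum.distrib)
    also have "(\<Sum>i\<le>?r. (if i = k-1-j then a j else 0) * G i) = a j * G (k-1-j)"
      by (rule delta_sum) simp
    also have "(\<Sum>i\<le>?r. (if i = k-1+j then b j else 0) * G i) = b j * G (k-1+j)"
    proof (rule delta_sum)
      have "j < k" using j by simp
      then show "k-1+j \<le> 2*(k-1)" by arith
    qed
    finally show "(\<Sum>i\<le>?r. (if i = k-1-j then a j else 0) * G i + (if i = k-1+j then b j else 0) * G i)
       = a j * G (k-1-j) + b j * G (k-1+j)" .
  qed
  also have "a 0 * G (k-1) + (\<Sum>j\<in>{1..<k}. a j * G (k-1-j) + b j * G (k-1+j)) = LL x"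
  proof -
    have g0: "G (k-1) = fr n x"
    proof -
      have "d*(k-1) + d*(NN-(k-1)) = d * NN" using kN k1 by (simp add: distrib_left[symmetric])
      also have "d * NN = n * dd'" using d_eq n_eq2 by (metis mult.commute mult.left_commute)
      finally show ?thesis unfolding G_def by (simp add: fr_fr fr_conj)
    qed
    have gj: "a j * G (k-1-j) + b j * G (k-1+j) = fr (d*(NN+j)) (a j * x) + a j * fr (d*(NN-j)) x"
      if j: "j \<in> {1..<k}" for j
    proof -
      have "d*(k-1-j) + d*(NN-(k-1)) = d*(NN-j)" using kN k1 j by (simp add: distrib_left[symmetric])
      moreover have "d*(k-1+j) + d*(NN-(k-1)) = d*(NN+j)" using kN k1 j by (simp add: distrib_left[symmetric])
      ultimately show ?thesis unfolding G_def b_def by (simp add: fr_fr fr_mult add.commute)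
    qed
    have "(\<Sum>j\<in>{1..<k}. a j * G (k-1-j) + b j * G (k-1+j))
        = (\<Sum>j\<in>{1..<k}. fr (d*(NN+j)) (a j * x) + a j * fr (d*(NN-j)) x)"
      by (rule sum.cong[OF refl gj])
    then show ?thesis unfolding LL_def g0 by simp
  qed
  finally show ?thesis unfolding G_def by simp
qed

lemma cc_nz: assumes "a 0 \<noteq> 0 \<or> (\<exists>j\<in>{1..<k}. a j \<noteq> 0)" shows "\<exists>i\<le>2*(k-1). cc i \<noteq> 0"
  using assms
proof
  assume a0: "a 0 \<noteq> 0"
  have "cc (k-1) = a 0"
  proof -
    have "(\<Sum>j\<in>{1..<k}. (if k-1 = k-1-j then a j else 0)
          + (if k-1 = k-1+j then fr (d*(NN+j)) (a j) else 0)) = (\<Sum>j\<in>{1..<k}. 0)"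
      by (rule sum.cong) auto
    then show ?thesis unfolding cc_def by simp
  qed
  then show ?thesis using a0 by (intro exI[of _ "k-1"]) simp
next
  assume "\<exists>j\<in>{1..<k}. a j \<noteq> 0"
  then obtain j where j: "j \<in> {1..<k}" "a j \<noteq> 0" by blast
  have "cc (k-1-j) = a j"
  proof -
    have "(\<Sum>j'\<in>{1..<k}. (if k-1-j = k-1-j' then a j' else 0)
          + (if k-1-j = k-1+j' then fr (d*(NN+j')) (a j') else 0)) = (\<Sum>j'\<in>{1..<k}. if j' = j then a j' else 0)"
      using j(1) by (intro sum.cong) auto
    also have "\<dots> = a j" using j(1) by (simp add: sum.delta')
    moreover have ne: "k-1-j \<noteq> k-1" using j(1) by auto
    ultimately show ?thesis unfolding cc_def by simp
  qed
  then show ?thesis using j by (intro exI[of _ "k-1-j"]) simp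
qed

lemma card_Rad:
  assumes "a 0 \<noteq> 0 \<or> (\<exists>j\<in>{1..<k}. a j \<noteq> 0)"
  shows "card (Rad (Bform m n d e k a)) \<le> card (subfield_elems e :: 'a set) ^ (2*(k-1))"
proof -
  let ?P = "\<lambda>w. (\<Sum>i\<le>2*(k-1). cc i * fr (d*i) w)"
  let ?f = "fr (d*(NN-(k-1))) :: 'a \<Rightarrow> 'a"
  have inj: "inj_on ?f {x. LL x = 0}" by (rule inj_onI) (rule fr_inj[OF char2])
  have "card {x. LL x = 0} \<le> card {w. ?P w = 0}"
    by (rule card_inj_on_le[OF inj]) (use LL_P in force)+
  also have "\<dots> \<le> card (subfield_elems e :: 'a set) ^ (2*(k-1))"
  proof (rule ker_bound[OF char2])
    show "fr d y = y \<Longrightarrow> y \<in> subfield_elems e" for y :: 'a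
      using fixK unfolding subfield_elems_def fr_def by simp
    show "\<exists>i\<le>2*(k-1). cc i \<noteq> 0" by (rule cc_nz[OF assms])
  qed
  finally show ?thesis using Rad_eq by simp
qed

lemma rk_bound:
  assumes "a 0 \<noteq> 0 \<or> (\<exists>j\<in>{1..<k}. a j \<noteq> 0)"
  shows "rk_over m e (Bform m n d e k a) \<ge> m div e - 2 * (k - 1)"
proof -
  interpret sf "subfield_elems e :: 'a set"
  proof
    show "(0::'a) \<in> subfield_elems e" "(1::'a) \<in> subfield_elems e" unfolding subfield_elems_def by simp_all
    show "x - y \<in> subfield_elems e" if "x \<in> subfield_elems e" "y \<in> subfield_elems e" for x y :: 'a
      using that fr_diff[OF char2, of e x y] unfolding subfield_elems_def fr_def by simp
    show "x * y \<in> subfield_elems e" if "x \<in> subfield_elems e" "y \<in> subfield_elems e" for x y :: 'a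
      using that unfolding subfield_elems_def by (simp add: power_mult_distrib)
    show "inverse x \<in> subfield_elems e" if "x \<in> subfield_elems e" for x :: 'a
      using that unfolding subfield_elems_def by (simp add: power_inverse)
  qed
  have "dim_over (subfield_elems e) (Rad (Bform m n d e k a)) \<le> 2*(k-1)"
  proof (rule dim_bound)
    show "0 \<in> Rad (Bform m n d e k a)" unfolding Rad_eq using LL_zero by simp
    show "x + y \<in> Rad (Bform m n d e k a)" if "x \<in> Rad (Bform m n d e k a)" "y \<in> Rad (Bform m n d e k a)" for x y
      using that unfolding Rad_eq by (simp add: LL_add)
    show "c * x \<in> Rad (Bform m n d e k a)" if "c \<in> subfield_elems e" "x \<in> Rad (Bform m n d e k a)" for c x
      using that LL_scale[of c x] unfolding Rad_eq subfield_elems_def fr_def by simp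
    show "card (Rad (Bform m n d e k a)) \<le> card (subfield_elems e :: 'a set) ^ (2*(k-1))" using card_Rad[OF assms] by simp
  qed
  then show ?thesis unfolding rk_over_def by (rule diff_le_mono2)
qed
end

end


theorem theorem2p1:
  fixes m n d e k :: nat and a :: "nat \<Rightarrow> 'a::{field,finite}"
  assumes "card (UNIV :: 'a set) = 2 ^ m" and "(2::'a) = 0"
    and "n > 0" and "d > 0" and "m = 2 * n"
    and "e = gcd n d" and "e = gcd m d"
    and "1 \<le> k" and "k \<le> n div e"
    and "a 0 \<in> subfield_elems n"
    and "a 0 \<noteq> 0 \<or> (\<exists>j\<in>{1..<k}. a j \<noteq> 0)"
  shows "rk_over m e (Bform m n d e k a) \<ge> m div e - 2 * (k - 1)"
proof (rule rk_bound)
  show "card (UNIV :: 'a set) = 2 ^ m" "(2::'a) = 0" "n > 0" "d > 0" "m = 2 * n" "e = gcd n d" "e = gcd m d"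
    "1 \<le> k" using assms by simp_all
  show "k \<le> NN n e" using assms(9) NN_def[OF assms(1,2,3,4,5,6,7)] by simp
  show "fr n (a 0) = a 0" using assms(10) by (simp add: fr_def subfield_elems_def)
  show "a 0 \<noteq> 0 \<or> (\<exists>j\<in>{1..<k}. a j \<noteq> 0)" by (rule assms(11))
qed

end
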